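(* For every $m\geq0$ the vector $c_{2m+1}\cdot v$ is a scalar multiple $\gamma_m v$ of $v$, and as formal power series in $z$, $$\sum_{m=0}^\infty \gamma_m\, z^{m}=\frac{1}{z}\left(1-\prod_{i=1}^N\frac{1-z\,\lambda_i(\lambda_i+1)}{1-z\,\lambda_i(\lambda_i-1)}\right).$$ Equivalently, $\sum_{m\ge0}\gamma_m u^{-2m-1}=u\Big(1-\prod_{i=1}^N\frac{u^2-\lambda_i(\lambda_i+1)}{u^2-\lambda_i(\lambda_i-1)}\Big)$ as formal Laurent series in $u^{-1}$.
   Context: Let $N\geq1$, $I=\{-N,\dots,-1,1,\dots,N\}$, and for $k\in I$ put $\bar k=0$ if $k>0$, $\bar k=1$ if $k<0$. The Lie superalgebra $\mathfrak{q}(N)$ over $\mathbb{C}$ is spanned by elements $F_{ij}$ ($i,j\in I$) with $F_{-i,-j}=F_{ij}$ (realized as $F_{ij}=E_{ij}+E_{-i,-j}\in\mathfrak{gl}(N|N)$), $F_{ij}$ of parity $\bar\imath+\bar\jmath\bmod 2$, and supercommutator $$[F_{ij}, F_{kl}] = \delta_{kj} F_{il} - (-1)^{(\bar{\imath}+ \bar{\jmath})(\bar{k} + \bar{l})} \delta_{il} F_{kj} + \delta_{k,-j} F_{-i,l} - (-1)^{(\bar{\imath} + \bar{\jmath})(\bar{k} + \bar{l})} \delta_{-i,l} F_{k,-j}.$$ For $n\geq1$ define $C^{(n)}_{ij}\in U(\mathfrak{q}(N))$ by $$C^{(n)}_{ij} = \sum_{k_1,\ldots,k_{n-1}\in I}F_{ik_1}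 (-1)^{\bar{k}_1} F_{k_1k_2} (-1)^{\bar{k}_2} \cdots F_{k_{n-2}k_{n-1}} (-1)^{\bar{k}_{n-1}} F_{k_{n-1}j}$$ (so $C^{(1)}_{ij}=F_{ij}$), and the Casimir element $c_n=\sum_{i\in I}C^{(n)}_{ii}$. Let $V$ be a representation of $\mathfrak{q}(N)$ and $v\in V$ a vector such that $F_{ij}\cdot v=0$ whenever $|i|<|j|$, and $F_{ii}\cdot v=\lambda_i v$ for $i=1,\dots,N$, where $\lambda_1,\dots,\lambda_N\in\mathbb{C}$. *)

theory Defs
  imports Main "HOL-Computational_Algebra.Formal_Power_Series"
begin

definition idx :: "nat \<Rightarrow> int set" where
  "idx N = {- int N .. -1} \<union> {1 .. int N}"

definition par :: "int \<Rightarrow> nat" where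
  "par k = (if k < 0 then 1 else 0)"

text \<open>A representation of q(N) on a complex vector space (carrier type 'v, scalar
  multiplication sc): operators F i j (i,j in I), each linear, with F(-i,-j) = F(i,j),
  satisfying the supercommutator relations, i.e. a module over U(q(N)).\<close>
definition is_qrep :: "nat \<Rightarrow> (complex \<Rightarrow> 'v::ab_group_add \<Rightarrow> 'v) \<Rightarrow> (int \<Rightarrow> int \<Rightarrow> 'v \<Rightarrow> 'v) \<Rightarrow> bool" where
  "is_qrep N sc F \<longleftrightarrow>
     vector_space sc \<and>
     (\<forall>i\<in>idx N. \<forall>j\<in>idx N. Vector_Spaces.linear sc sc (F i j)) \<and>
     (\<forall>i\<in>idx N. \<forall>j\<in>idx N. F (-i) (-j) = F i j) \<and>
     (\<forall>i\<in>idx N. \<forall>j\<in>idx N. \<forall>k\<in>idx N. \<forall>l\<in>idx N. \<forall>x.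
        (let s = (-1::complex) ^ ((par i + par j) * (par k + par l)) in
          F i j (F k l x) - sc s (F k l (F i j x)) =
            (if k = j then F i l x else 0)
            - sc s (if i = l then F k j x else 0)
            + (if k = - j then F (- i) l x else 0)
            - sc s (if - i = l then F k (- j) x else 0)))"

text \<open>Action of C^(n)_{ij} on a vector:
  C^(1)_{ij} = F_{ij},  C^(n+1)_{ij} = sum_k F_{ik} (-1)^{bar k} C^(n)_{kj}.
  (The value for n = 0 is an irrelevant convention.)\<close>
fun Cop :: "nat \<Rightarrow> (complex \<Rightarrow> 'v::ab_group_add \<Rightarrow> 'v) \<Rightarrow> (int \<Rightarrow> int \<Rightarrow> 'v \<Rightarrow> 'v) \<Rightarrow> nat \<Rightarrow> int \<Rightarrow> int \<Rightarrow> 'v \<Rightarrow> 'v" where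
  "Cop N sc F 0 i j x = 0"
| "Cop N sc F (Suc 0) i j x = F i j x"
| "Cop N sc F (Suc (Suc n)) i j x =
     (\<Sum>k\<in>idx N. F i k (sc ((-1::complex) ^ par k) (Cop N sc F (Suc n) k j x)))"

definition casimir :: "nat \<Rightarrow> (complex \<Rightarrow> 'v::ab_group_add \<Rightarrow> 'v) \<Rightarrow> (int \<Rightarrow> int \<Rightarrow> 'v \<Rightarrow> 'v) \<Rightarrow> nat \<Rightarrow> 'v \<Rightarrow> 'v" where
  "casimir N sc F n x = (\<Sum>i\<in>idx N. Cop N sc F n i i x)"

end

theory Submission
  imports Defs
begin


lemma idx_iff: "k \<in> idx N \<longleftrightarrow> k \<noteq> 0 \<and> \<bar>k\<bar> \<le> int N"
  unfolding idx_def by auto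
lemma idx_neg: "k \<in> idx N \<Longrightarrow> -k \<in> idx N" by (auto simp: idx_iff)
lemma idx_nz: "k \<in> idx N \<Longrightarrow> k \<noteq> 0" by (auto simp: idx_iff)
lemma finite_idx[simp]: "finite (idx N)" by (simp add: idx_def)

definition sg :: "int \<Rightarrow> int \<Rightarrow> int \<Rightarrow> int \<Rightarrow> complex" where
  "sg a b c d = (-1::complex) ^ ((par a + par b) * (par c + par d))"

lemma sg_mult: "sg a b i k * sg a b k j = sg a b i j"
  unfolding sg_def par_def by (simp split: if_splits)

lemma sg_sq: "sg a b c d * sg a b c d = 1"
  unfolding sg_def par_def by (simp split: if_splits)

lemma s_sq: "(-1::complex) ^ par k * (-1) ^ par k = 1"
  unfolding par_def by simp

lemma sg_a: "sg a b i a * (-1) ^ par a = sg a b i b * (-1) ^ par b"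
  unfolding sg_def par_def by (simp split: if_splits)

lemma sg_na: "a \<noteq> 0 \<Longrightarrow> b \<noteq> 0 \<Longrightarrow> sg a b i (-a) * (-1) ^ par (-a) = sg a b i (-b) * (-1) ^ par (-b)"
  unfolding sg_def par_def by (auto split: if_splits)



locale qr = module sc for sc :: "complex \<Rightarrow> 'v::ab_group_add \<Rightarrow> 'v" +
  fixes N :: nat and F :: "int \<Rightarrow> int \<Rightarrow> 'v \<Rightarrow> 'v"
  assumes Fadd: "i \<in> idx N \<Longrightarrow> j \<in> idx N \<Longrightarrow> F i j (x + y) = F i j x + F i j y"
    and Fscale: "i \<in> idx N \<Longrightarrow> j \<in> idx N \<Longrightarrow> F i j (sc c x) = sc c (F i j x)"
    and Fsym: "i \<in> idx N \<Longrightarrow> j \<in> idx N \<Longrightarrow> F (-i) (-j) = F i j"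
    and Frel: "i \<in> idx N \<Longrightarrow> j \<in> idx N \<Longrightarrow> k \<in> idx N \<Longrightarrow> l \<in> idx N \<Longrightarrow>
      F i j (F k l x) - sc (sg i j k l) (F k l (F i j x)) =
            (if k = j then F i l x else 0)
            - sc (sg i j k l) (if i = l then F k j x else 0)
            + (if k = - j then F (- i) l x else 0)
            - sc (sg i j k l) (if - i = l then F k (- j) x else 0)"
begin

abbreviation C where "C \<equiv> Cop N sc F"

lemma F0: "i \<in> idx N \<Longrightarrow> j \<in> idx N \<Longrightarrow> F i j 0 = 0"
  using Fscale[of i j 0 0] by simp

lemma Fdiff: "i \<in> idx N \<Longrightarrow> j \<in> idx N \<Longrightarrow> F i j (x - y) = F i j x - F i j y"
  using Fadd[of i j "x - y" y] by (simp add: algebra_simps)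

lemma Fsum: "i \<in> idx N \<Longrightarrow> j \<in> idx N \<Longrightarrow> F i j (sum g A) = (\<Sum>a\<in>A. F i j (g a))"
  by (induct A rule: infinite_finite_induct) (simp_all add: F0 Fadd)

lemma Fif: "i \<in> idx N \<Longrightarrow> j \<in> idx N \<Longrightarrow> F i j (if P then x else 0) = (if P then F i j x else 0)"
  by (simp add: F0)

lemma scif: "sc c (if P then x else 0) = (if P then sc c x else 0)"
  by simp

lemma adj:
  assumes "a \<in> idx N" "b \<in> idx N" "i \<in> idx N" "j \<in> idx N"
  shows "F a b (C (Suc m) i j x) - sc (sg a b i j) (C (Suc m) i j (F a b x)) =
   (if i = b then C (Suc m) a j x else 0) - sc (sg a b i j) (if a = j then C (Suc m) i b x else 0)
   + (if i = -b then C (Suc m) (-a) j x else 0) - sc (sg a b i j) (if -a = j then C (Suc m) i (-b) x else 0)"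
  using assms
proof (induction m arbitrary: a b i j x)
  case 0
  thus ?case using Frel[of a b i j x] by simp
next
  case (Suc m)
  note ab = Suc.prems
  define n where "n = Suc m"
  define s where "s k = (-1::complex) ^ par k" for k
  define \<sigma> where "\<sigma> = sg a b i j"
  define D where "D k = sc (s k) (C n k j x)" for k
  define E where "E k = sc (s k) (C n k j (F a b x))" for k
  have Cdef: "C (Suc n) i' j' y = (\<Sum>k\<in>idx N. F i' k (sc (s k) (C n k j' y)))" for i' j' y
    by (simp add: n_def s_def)
  have perk: "F a b (F i k (D k)) - sc \<sigma> (F i k (E k)) =
     (if i=b then F a k (D k) else 0) - sc (sg a b i k) (if a=k then F i b (D k) else 0)
   + (if i = -b then F (-a) k (D k) else 0) - sc (sg a b i k) (if -a=k then F i (-b) (D k) else 0)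
   + sc (sg a b i k) (F i k (sc (s k) ((if k = b then C n a j x else 0) + (if k = -b then C n (-a) j x else 0))))
   - sc \<sigma> (if a = j then F i k (sc (s k) (C n k b x)) else 0)
   - sc \<sigma> (if -a = j then F i k (sc (s k) (C n k (-b) x)) else 0)"
    if k: "k \<in> idx N" for k
  proof -
    have r1: "F a b (F i k (D k)) = sc (sg a b i k) (F i k (F a b (D k))) +
      ((if i=b then F a k (D k) else 0) - sc (sg a b i k) (if a=k then F i b (D k) else 0)
       + (if i = -b then F (-a) k (D k) else 0) - sc (sg a b i k) (if -a=k then F i (-b) (D k) else 0))"
      using Frel[of a b i k "D k"] ab k by (simp add: algebra_simps)
    have ih: "F a b (C n k j x) = sc (sg a b k j) (C n k j (F a b x)) +
      ((if k = b then C n a j x else 0) - sc (sg a b k j) (if a = j then C n k b x else 0)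
       + (if k = -b then C n (-a) j x else 0) - sc (sg a b k j) (if -a = j then C n k (-b) x else 0))"
      using Suc.IH[of a b k j x] ab k unfolding n_def by (simp add: algebra_simps)
    have sgk: "sg a b i k * (s k * sg a b k j) = \<sigma> * s k"
      using sg_mult[of a b i k j] unfolding \<sigma>_def by (simp add: algebra_simps)
    have "F i k (F a b (D k)) = sc (s k) (sc (sg a b k j) (F i k (C n k j (F a b x))))
        + F i k (sc (s k) ((if k = b then C n a j x else 0) + (if k = -b then C n (-a) j x else 0)))
        - sc (s k) (sc (sg a b k j) ((if a = j then F i k (C n k b x) else 0) + (if -a = j then F i k (C n k (-b) x) else 0)))"
      unfolding D_def using ab k
      by (simp add: Fscale ih Fadd Fdiff F0 algebra_simps)
    note h = this
    have "sc (sg a b i k) (F i k (F a b (D k))) = sc (sg a b i k) (sc (s k) (sc (sg a b k j) (F i k (C n k j (F a b x))))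
        + F i k (sc (s k) ((if k = b then C n a j x else 0) + (if k = -b then C n (-a) j x else 0)))
        - sc (s k) (sc (sg a b k j) ((if a = j then F i k (C n k b x) else 0) + (if -a = j then F i k (C n k (-b) x) else 0))))"
      by (simp only: h)
    also have "\<dots> = sc \<sigma> (F i k (E k))
        + sc (sg a b i k) (F i k (sc (s k) ((if k = b then C n a j x else 0) + (if k = -b then C n (-a) j x else 0))))
        - sc \<sigma> ((if a = j then F i k (sc (s k) (C n k b x)) else 0) + (if -a = j then F i k (sc (s k) (C n k (-b) x)) else 0))"
      unfolding E_def using ab k sgk
      by (simp only: scale_right_distrib scale_right_diff_distrib scale_scale Fscale scif sgk mult.commute[of "s k"])
    finally have h2: "sc (sg a b i k) (F i k (F a b (D k))) = sc \<sigma> (F i k (E k))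
        + sc (sg a b i k) (F i k (sc (s k) ((if k = b then C n a j x else 0) + (if k = -b then C n (-a) j x else 0))))
        - sc \<sigma> ((if a = j then F i k (sc (s k) (C n k b x)) else 0) + (if -a = j then F i k (sc (s k) (C n k (-b) x)) else 0))" .
    show ?thesis using r1 h2 by (simp add: algebra_simps scif)
  qed
  have ai: "a \<in> idx N" "b \<in> idx N" "-a \<in> idx N" "-b \<in> idx N" "a \<noteq> 0" "b \<noteq> 0"
    using ab by (auto simp: idx_neg idx_nz)
  have "F a b (C (Suc n) i j x) - sc \<sigma> (C (Suc n) i j (F a b x)) =
     (\<Sum>k\<in>idx N. F a b (F i k (D k)) - sc \<sigma> (F i k (E k)))"
    unfolding Cdef D_def E_def using ab
    by (simp add: Fsum scale_sum_right sum_subtractf)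
  also have "\<dots> = (\<Sum>k\<in>idx N. (if i=b then F a k (D k) else 0)) - (\<Sum>k\<in>idx N. sc (sg a b i k) (if a=k then F i b (D k) else 0))
   + (\<Sum>k\<in>idx N. (if i = -b then F (-a) k (D k) else 0)) - (\<Sum>k\<in>idx N. sc (sg a b i k) (if -a=k then F i (-b) (D k) else 0))
   + (\<Sum>k\<in>idx N. sc (sg a b i k) (F i k (sc (s k) ((if k = b then C n a j x else 0) + (if k = -b then C n (-a) j x else 0)))))
   - (\<Sum>k\<in>idx N. sc \<sigma> (if a = j then F i k (sc (s k) (C n k b x)) else 0))
   - (\<Sum>k\<in>idx N. sc \<sigma> (if -a = j then F i k (sc (s k) (C n k (-b) x)) else 0))"
    by (simp add: perk sum.distrib sum_subtractf)
  also have "\<dots> = (if i = b then C (Suc n) a j x else 0) - sc (sg a b i a) (F i b (D a))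
   + (if i = -b then C (Suc n) (-a) j x else 0) - sc (sg a b i (-a)) (F i (-b) (D (-a)))
   + (sc (sg a b i b) (F i b (sc (s b) (C n a j x))) + sc (sg a b i (-b)) (F i (-b) (sc (s (-b)) (C n (-a) j x))))
   - sc \<sigma> (if a = j then C (Suc n) i b x else 0) - sc \<sigma> (if -a = j then C (Suc n) i (-b) x else 0)"
  proof -
    have e1: "(\<Sum>k\<in>idx N. (if i=b then F a k (D k) else 0)) = (if i = b then C (Suc n) a j x else 0)"
      unfolding Cdef D_def by simp
    have e2: "(\<Sum>k\<in>idx N. sc (sg a b i k) (if a=k then F i b (D k) else 0)) = sc (sg a b i a) (F i b (D a))"
      using ai by (simp add: scif sum.delta)
    have e3: "(\<Sum>k\<in>idx N. (if i=-b then F (-a) k (D k) else 0)) = (if i = -b then C (Suc n) (-a) j x else 0)"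
      unfolding Cdef D_def by simp
    have e4: "(\<Sum>k\<in>idx N. sc (sg a b i k) (if -a=k then F i (-b) (D k) else 0)) = sc (sg a b i (-a)) (F i (-b) (D (-a)))"
      using ai by (simp add: scif sum.delta)
    have e5: "(\<Sum>k\<in>idx N. sc (sg a b i k) (F i k (sc (s k) ((if k = b then C n a j x else 0) + (if k = -b then C n (-a) j x else 0)))))
       = (\<Sum>k\<in>idx N. (if k = b then sc (sg a b i b) (F i b (sc (s b) (C n a j x))) else 0))
        + (\<Sum>k\<in>idx N. (if k = -b then sc (sg a b i (-b)) (F i (-b) (sc (s (-b)) (C n (-a) j x))) else 0))"
      unfolding sum.distrib[symmetric]
      by (rule sum.cong) (use ai ab in \<open>auto simp: Fadd F0 Fscale\<close>)
    have e6: "(\<Sum>k\<in>idx N. sc \<sigma> (if a = j then F i k (sc (s k) (C n k b x)) else 0)) = sc \<sigma> (if a = j then C (Suc n) i b x else 0)"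
      unfolding Cdef by (simp add: scale_sum_right)
    have e7: "(\<Sum>k\<in>idx N. sc \<sigma> (if -a = j then F i k (sc (s k) (C n k (-b) x)) else 0)) = sc \<sigma> (if -a = j then C (Suc n) i (-b) x else 0)"
      unfolding Cdef by (simp add: scale_sum_right)
    show ?thesis unfolding e1 e2 e3 e4 e5 e6 e7 using ai by (simp add: sum.delta)
  qed
  also have "\<dots> = (if i = b then C (Suc n) a j x else 0)
   + (if i = -b then C (Suc n) (-a) j x else 0)
   - sc \<sigma> (if a = j then C (Suc n) i b x else 0) - sc \<sigma> (if -a = j then C (Suc n) i (-b) x else 0)"
  proof -
    have "sc (sg a b i a) (F i b (D a)) = sc (sg a b i b) (F i b (sc (s b) (C n a j x)))"
      unfolding D_def using ai ab sg_a[of a b i] by (simp add: Fscale s_def mult.commute)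
    moreover have "sc (sg a b i (-a)) (F i (-b) (D (-a))) = sc (sg a b i (-b)) (F i (-b) (sc (s (-b)) (C n (-a) j x)))"
      unfolding D_def using ai ab sg_na[of a b i] by (simp add: Fscale s_def mult.commute)
    ultimately show ?thesis by (simp add: algebra_simps)
  qed
  finally show ?case unfolding n_def \<sigma>_def by (simp add: algebra_simps)
qed


lemma C0: "i \<in> idx N \<Longrightarrow> j \<in> idx N \<Longrightarrow> C n i j 0 = 0"
proof (induction n arbitrary: i j)
  case 0 thus ?case by simp
next
  case (Suc n)
  thus ?case by (cases n) (simp_all add: F0)
qed

lemma half: "y + y = z + z \<Longrightarrow> y = (z::'v)"
proof -
  assume h: "y + y = z + z"
  have "sc 2 y = sc 2 z" using h scale_left_distrib[of 1 1 y] scale_left_distrib[of 1 1 z] by simp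
  hence "sc (1/2) (sc 2 y) = sc (1/2) (sc 2 z)" by simp
  thus ?thesis by simp
qed

lemma FE: "i \<in> idx N \<Longrightarrow> F i (-i) = F (-i) i"
  using Fsym[of "-i" i] idx_neg by auto

lemma EE: "i \<in> idx N \<Longrightarrow> F (-i) i (F (-i) i x) = F i i x"
proof -
  assume i: "i \<in> idx N"
  hence ni: "-i \<in> idx N" "i \<noteq> 0" by (auto simp: idx_neg idx_nz)
  have sg: "sg (-i) i (-i) i = -1" unfolding sg_def par_def using ni by auto
  have "F (-i) i (F (-i) i x) + F (-i) i (F (-i) i x) = F i i x + F i i x"
    using Frel[of "-i" i "-i" i x] i ni sg Fsym[of i i] by (simp add: algebra_simps)
  thus ?thesis by (rule half)
qed

lemma EH: "i \<in> idx N \<Longrightarrow> F i i (F (-i) i x) = F (-i) i (F i i x)"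
proof -
  assume i: "i \<in> idx N"
  hence ni: "-i \<in> idx N" "i \<noteq> 0" by (auto simp: idx_neg idx_nz)
  have sg: "sg i i (-i) i = 1" unfolding sg_def par_def using ni by auto
  show ?thesis using Frel[of i i "-i" i x] i ni sg by (simp add: algebra_simps)
qed

end

lemma spar_neg: "k \<noteq> 0 \<Longrightarrow> (-1::complex) ^ par (-k) = - ((-1) ^ par k)"
  unfolding par_def by auto

lemma sg_ikki: "sg i k k i = (-1) ^ par i * (-1) ^ par k"
  unfolding sg_def par_def by auto

lemma sg_nikki: "i \<noteq> 0 \<Longrightarrow> sg (-i) k k i = 1"
  unfolding sg_def par_def by auto

lemma split_sum: assumes "i \<in> idx N"
  shows "(\<Sum>k\<in>idx N. f k) = f i + f (-i) + (\<Sum>k\<in>{k\<in>idx N. \<bar>k\<bar> < \<bar>i\<bar>}. f k) + (\<Sum>k\<in>{k\<in>idx N. \<bar>i\<bar> < \<bar>k\<bar>}. f k)"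
proof -
  have nz: "i \<noteq> 0" "-i \<in> idx N" using assms by (auto simp: idx_nz idx_neg)
  have "idx N = {i, -i} \<union> ({k\<in>idx N. \<bar>k\<bar> < \<bar>i\<bar>} \<union> {k\<in>idx N. \<bar>i\<bar> < \<bar>k\<bar>})"
    using assms nz by auto
  hence "(\<Sum>k\<in>idx N. f k) = (\<Sum>k\<in>{i, -i} \<union> ({k\<in>idx N. \<bar>k\<bar> < \<bar>i\<bar>} \<union> {k\<in>idx N. \<bar>i\<bar> < \<bar>k\<bar>}). f k)"
    by simp
  also have "\<dots> = (\<Sum>k\<in>{i, -i}. f k) + (\<Sum>k\<in>{k\<in>idx N. \<bar>k\<bar> < \<bar>i\<bar>} \<union> {k\<in>idx N. \<bar>i\<bar> < \<bar>k\<bar>}. f k)"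
    by (rule sum.union_disjoint) auto
  also have "(\<Sum>k\<in>{k\<in>idx N. \<bar>k\<bar> < \<bar>i\<bar>} \<union> {k\<in>idx N. \<bar>i\<bar> < \<bar>k\<bar>}. f k)
     = (\<Sum>k\<in>{k\<in>idx N. \<bar>k\<bar> < \<bar>i\<bar>}. f k) + (\<Sum>k\<in>{k\<in>idx N. \<bar>i\<bar> < \<bar>k\<bar>}. f k)"
    by (rule sum.union_disjoint) auto
  finally show ?thesis using nz by (simp add: add.assoc)
qed

lemma sum_gt: assumes "p \<ge> 0"
  shows "(\<Sum>k\<in>{k\<in>idx N. p < \<bar>k\<bar>}. f k) = (\<Sum>q\<in>{p<..int N}. f q + f (-q))"
proof -
  have "{k\<in>idx N. p < \<bar>k\<bar>} = {p<..int N} \<union> uminus ` {p<..int N}"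
  proof (rule set_eqI, rule iffI)
    fix k assume "k \<in> {k\<in>idx N. p < \<bar>k\<bar>}"
    thus "k \<in> {p<..int N} \<union> uminus ` {p<..int N}"
      using assms by (cases "k > 0") (auto simp: idx_iff image_iff intro!: bexI[of _ "-k"])
  next
    fix k assume "k \<in> {p<..int N} \<union> uminus ` {p<..int N}"
    thus "k \<in> {k\<in>idx N. p < \<bar>k\<bar>}" using assms by (auto simp: idx_iff)
  qed
  hence "(\<Sum>k\<in>{k\<in>idx N. p < \<bar>k\<bar>}. f k) = (\<Sum>k\<in>{p<..int N} \<union> uminus ` {p<..int N}. f k)" by simp
  also have "\<dots> = (\<Sum>k\<in>{p<..int N}. f k) + (\<Sum>k\<in>uminus ` {p<..int N}. f k)"
    by (rule sum.union_disjoint) (use assms in auto)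
  also have "(\<Sum>k\<in>uminus ` {p<..int N}. f k) = (\<Sum>q\<in>{p<..int N}. f (-q))"
    by (subst sum.reindex) (auto simp: inj_on_def)
  finally show ?thesis by (simp add: sum.distrib)
qed



fun bet :: "nat \<Rightarrow> (int \<Rightarrow> complex) \<Rightarrow> nat \<Rightarrow> int \<Rightarrow> complex" where
  "bet N lam 0 p = 1"
| "bet N lam (Suc m) p = lam p * (lam p - 1) * bet N lam m p - 2 * (\<Sum>q\<in>{p<..int N}. lam q * bet N lam m q)"

locale hw = qr sc N F for sc :: "complex \<Rightarrow> 'v::ab_group_add \<Rightarrow> 'v" and N F +
  fixes v :: 'v and lam :: "int \<Rightarrow> complex"
  assumes hw0: "i \<in> idx N \<Longrightarrow> j \<in> idx N \<Longrightarrow> \<bar>i\<bar> < \<bar>j\<bar> \<Longrightarrow> F i j v = 0"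
    and hwd: "i \<in> {1..int N} \<Longrightarrow> F i i v = sc (lam i) v"
begin

lemma Fii: "i \<in> idx N \<Longrightarrow> F i i v = sc (lam \<bar>i\<bar>) v"
proof -
  assume i: "i \<in> idx N"
  show ?thesis
  proof (cases "i > 0")
    case True thus ?thesis using i hwd[of i] by (auto simp: idx_iff)
  next
    case False
    hence "F i i = F (-i) (-i)" using Fsym[of "-i" "-i"] i idx_neg[OF i] by simp
    thus ?thesis using False i hwd[of "-i"] by (auto simp: idx_iff)
  qed
qed

lemma HW: "i \<in> idx N \<Longrightarrow> j \<in> idx N \<Longrightarrow> \<bar>i\<bar> < \<bar>j\<bar> \<Longrightarrow> C (Suc m) i j v = 0"
proof (induction m arbitrary: i j)
  case 0 thus ?case using hw0 by simp
next
  case (Suc m)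
  have "F i k (sc ((-1) ^ par k) (C (Suc m) k j v)) = 0" if k: "k \<in> idx N" for k
  proof (cases "\<bar>k\<bar> < \<bar>j\<bar>")
    case True thus ?thesis using Suc k by (simp add: F0)
  next
    case False
    hence ik: "\<bar>i\<bar> < \<bar>k\<bar>" using Suc.prems by simp
    have "F i k (C (Suc m) k j v) - sc (sg i k k j) (C (Suc m) k j (F i k v)) =
      (if k = k then C (Suc m) i j v else 0) - sc (sg i k k j) (if i = j then C (Suc m) k k v else 0)
     + (if k = -k then C (Suc m) (-i) j v else 0) - sc (sg i k k j) (if -i = j then C (Suc m) k (-k) v else 0)"
      using adj[of i k k j m v] Suc.prems k by simp
    moreover have "i \<noteq> j" "-i \<noteq> j" "k \<noteq> -k" using Suc.prems k by (auto simp: idx_iff)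
    ultimately have "F i k (C (Suc m) k j v) = 0"
      using Suc.IH[of i j] Suc.prems hw0[of i k] ik k C0 by simp
    thus ?thesis using Suc.prems k by (simp add: Fscale)
  qed
  thus ?case by simp
qed

lemma bigA: "i \<in> idx N \<Longrightarrow> k \<in> idx N \<Longrightarrow> \<bar>i\<bar> < \<bar>k\<bar> \<Longrightarrow>
  F i k (C (Suc m) k i v) = C (Suc m) i i v - sc ((-1) ^ par i * (-1) ^ par k) (C (Suc m) k k v)"
proof -
  assume a: "i \<in> idx N" "k \<in> idx N" "\<bar>i\<bar> < \<bar>k\<bar>"
  have "k \<noteq> -k" "-i \<noteq> i" using a by (auto simp: idx_iff)
  thus ?thesis using adj[of i k k i m v] a hw0[of i k] C0 sg_ikki[of i k] by simp
qed

lemma bigB: "i \<in> idx N \<Longrightarrow> k \<in> idx N \<Longrightarrow> \<bar>i\<bar> < \<bar>k\<bar> \<Longrightarrow>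
  F (-i) k (C (Suc m) k i v) = C (Suc m) (-i) i v - C (Suc m) k (-k) v"
proof -
  assume a: "i \<in> idx N" "k \<in> idx N" "\<bar>i\<bar> < \<bar>k\<bar>"
  have "k \<noteq> -k" "-i \<noteq> i" "i \<noteq> 0" "-i \<in> idx N" using a by (auto simp: idx_iff)
  thus ?thesis using adj[of "-i" k k i m v] a hw0[of "-i" k] C0 sg_nikki[of i k] by simp
qed


lemma Fneg: "i \<in> idx N \<Longrightarrow> j \<in> idx N \<Longrightarrow> F i j (- x) = - F i j x"
  using Fdiff[of i j 0 x] by (simp add: F0)

lemma sc_comb2: "sc a (sc b w - sc c w) = sc (a*b - a*c) w"
  by (simp add: scale_right_diff_distrib scale_left_diff_distrib)

lemma sc_comb: "sc a (sc b w - sc c (sc d w)) = sc (a*b - a*c*d) w"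
  by (simp add: scale_right_diff_distrib scale_left_diff_distrib mult.assoc)

lemma odd_to_even:
  assumes O: "\<And>j. j \<in> idx N \<Longrightarrow> C (Suc (2*m)) j j v = sc (lam \<bar>j\<bar> * bet N lam m \<bar>j\<bar>) v \<and>
                  C (Suc (2*m)) (-j) j v = sc (bet N lam m \<bar>j\<bar>) (F (-j) j v)"
    and i: "i \<in> idx N"
  shows "C (Suc (Suc (2*m))) i i v = sc ((-1)^par i * bet N lam (Suc m) \<bar>i\<bar>) v \<and>
         C (Suc (Suc (2*m))) (-i) i v = 0"
proof -
  define n where "n = Suc (2*m)"
  define p where "p = \<bar>i\<bar>"
  have ni: "-i \<in> idx N" "i \<noteq> 0" "p \<ge> 0" using i by (auto simp: idx_iff p_def)
  have sni: "(-1::complex)^par (-i) = - ((-1)^par i)" using ni by (simp add: spar_neg)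
  have Oi: "C n i i v = sc (lam p * bet N lam m p) v" "C n (-i) i v = sc (bet N lam m p) (F (-i) i v)"
    using O[OF i] by (simp_all add: n_def p_def)
  have small: "(\<Sum>k\<in>{k\<in>idx N. \<bar>k\<bar> < \<bar>i\<bar>}. g k (C n k i v)) = 0" if "\<And>k. k \<in> idx N \<Longrightarrow> g k 0 = 0" for g
    by (rule sum.neutral) (use i that in \<open>auto simp: n_def HW\<close>)
  have part1: "C (Suc n) i i v = sc ((-1)^par i * bet N lam (Suc m) p) v"
  proof -
    have "C (Suc n) i i v = (\<Sum>k\<in>idx N. F i k (sc ((-1)^par k) (C n k i v)))" by (simp add: n_def)
    also have "\<dots> = F i i (sc ((-1)^par i) (C n i i v)) + F i (-i) (sc ((-1)^par (-i)) (C n (-i) i v))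
       + (\<Sum>k\<in>{k\<in>idx N. \<bar>k\<bar> < \<bar>i\<bar>}. F i k (sc ((-1)^par k) (C n k i v)))
       + (\<Sum>k\<in>{k\<in>idx N. \<bar>i\<bar> < \<bar>k\<bar>}. F i k (sc ((-1)^par k) (C n k i v)))"
      by (rule split_sum[OF i])
    also have "F i i (sc ((-1)^par i) (C n i i v)) = sc ((-1)^par i * (lam p * bet N lam m p) * lam p) v"
      using Oi Fii[OF i] i by (simp add: Fscale p_def)
    also have "F i (-i) (sc ((-1)^par (-i)) (C n (-i) i v)) = sc (- ((-1)^par i) * bet N lam m p * lam p) v"
      using Oi Fii[OF i] i ni FE[OF i] EE[OF i] sni by (simp add: Fscale Fneg p_def)
    also have "(\<Sum>k\<in>{k\<in>idx N. \<bar>k\<bar> < \<bar>i\<bar>}. F i k (sc ((-1)^par k) (C n k i v))) = 0"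
      by (rule small) (use i in \<open>simp add: F0\<close>)
    also have "(\<Sum>k\<in>{k\<in>idx N. \<bar>i\<bar> < \<bar>k\<bar>}. F i k (sc ((-1)^par k) (C n k i v)))
        = sc (- ((-1)^par i * 2 * (\<Sum>q\<in>{p<..int N}. lam q * bet N lam m q))) v"
    proof -
      have "(\<Sum>k\<in>{k\<in>idx N. \<bar>i\<bar> < \<bar>k\<bar>}. F i k (sc ((-1)^par k) (C n k i v)))
         = (\<Sum>k\<in>{k\<in>idx N. p < \<bar>k\<bar>}. sc ((-1)^par k * (lam p * bet N lam m p) - (-1)^par i * (lam \<bar>k\<bar> * bet N lam m \<bar>k\<bar>)) v)"
      proof (rule sum.cong)
        fix k assume k0: "k \<in> {k\<in>idx N. p < \<bar>k\<bar>}"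
        hence k: "k \<in> idx N" "\<bar>i\<bar> < \<bar>k\<bar>" by (auto simp: p_def)
        have e: "(-1::complex)^par k * ((-1)^par i * (-1)^par k * x) = (-1)^par i * x" for x
          unfolding par_def by simp
        show "F i k (sc ((-1)^par k) (C n k i v)) = sc ((-1)^par k * (lam p * bet N lam m p) - (-1)^par i * (lam \<bar>k\<bar> * bet N lam m \<bar>k\<bar>)) v"
          using k i bigA[of i k "2*m"] Oi O[of k] by (simp add: Fscale n_def sc_comb2 e)
      qed (simp add: p_def)
      also have "\<dots> = sc (\<Sum>k\<in>{k\<in>idx N. p < \<bar>k\<bar>}. (-1)^par k * (lam p * bet N lam m p) - (-1)^par i * (lam \<bar>k\<bar> * bet N lam m \<bar>k\<bar>)) v"
        by (simp add: scale_sum_left)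
      also have "(\<Sum>k\<in>{k\<in>idx N. p < \<bar>k\<bar>}. (-1)^par k * (lam p * bet N lam m p) - (-1)^par i * (lam \<bar>k\<bar> * bet N lam m \<bar>k\<bar>))
          = (\<Sum>q\<in>{p<..int N}. - ((-1)^par i * 2 * (lam q * bet N lam m q)))"
        unfolding sum_gt[OF ni(3)]
      proof (rule sum.cong)
        fix q assume "q \<in> {p<..int N}"
        hence "q > 0" using ni by auto
        thus "(-1)^par q * (lam p * bet N lam m p) - (-1)^par i * (lam \<bar>q\<bar> * bet N lam m \<bar>q\<bar>) +
            ((-1)^par (-q) * (lam p * bet N lam m p) - (-1)^par i * (lam \<bar>-q\<bar> * bet N lam m \<bar>-q\<bar>))
           = - ((-1)^par i * 2 * (lam q * bet N lam m q))"
          unfolding par_def by (simp add: algebra_simps)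
      qed simp
      also have "\<dots> = - ((-1)^par i * 2 * (\<Sum>q\<in>{p<..int N}. lam q * bet N lam m q))"
        by (simp add: sum_distrib_left sum_negf)
      finally show ?thesis by (simp add: p_def)
    qed
    also have "sc ((-1)^par i * (lam p * bet N lam m p) * lam p) v + sc (- ((-1)^par i) * bet N lam m p * lam p) v + 0
       + sc (- ((-1)^par i * 2 * (\<Sum>q\<in>{p<..int N}. lam q * bet N lam m q))) v
       = sc ((-1)^par i * (lam p * bet N lam m p) * lam p + (- ((-1)^par i) * bet N lam m p * lam p)
       + (- ((-1)^par i * 2 * (\<Sum>q\<in>{p<..int N}. lam q * bet N lam m q)))) v"
      by (simp only: scale_left_distrib add_0_right)
    also have "(-1)^par i * (lam p * bet N lam m p) * lam p + (- ((-1)^par i) * bet N lam m p * lam p)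
       + (- ((-1)^par i * 2 * (\<Sum>q\<in>{p<..int N}. lam q * bet N lam m q))) = (-1)^par i * bet N lam (Suc m) p"
      by (simp add: algebra_simps)
    finally show ?thesis .
  qed
  have part2: "C (Suc n) (-i) i v = 0"
  proof -
    have "C (Suc n) (-i) i v = (\<Sum>k\<in>idx N. F (-i) k (sc ((-1)^par k) (C n k i v)))" by (simp add: n_def)
    also have "\<dots> = F (-i) i (sc ((-1)^par i) (C n i i v)) + F (-i) (-i) (sc ((-1)^par (-i)) (C n (-i) i v))
       + (\<Sum>k\<in>{k\<in>idx N. \<bar>k\<bar> < \<bar>i\<bar>}. F (-i) k (sc ((-1)^par k) (C n k i v)))
       + (\<Sum>k\<in>{k\<in>idx N. \<bar>i\<bar> < \<bar>k\<bar>}. F (-i) k (sc ((-1)^par k) (C n k i v)))"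
      by (rule split_sum[OF i])
    also have "F (-i) i (sc ((-1)^par i) (C n i i v)) = sc ((-1)^par i * (lam p * bet N lam m p)) (F (-i) i v)"
      using Oi i ni by (simp add: Fscale)
    also have "F (-i) (-i) (sc ((-1)^par (-i)) (C n (-i) i v)) = sc (- ((-1)^par i) * bet N lam m p * lam p) (F (-i) i v)"
    proof -
      have "F (-i) (-i) = F i i" using Fsym[of i i] i by simp
      thus ?thesis using Oi Fii[OF i] i ni EH[OF i] sni by (simp add: Fscale Fneg p_def)
    qed
    also have "(\<Sum>k\<in>{k\<in>idx N. \<bar>k\<bar> < \<bar>i\<bar>}. F (-i) k (sc ((-1)^par k) (C n k i v))) = 0"
      by (rule small) (use ni in \<open>simp add: F0\<close>)
    also have "(\<Sum>k\<in>{k\<in>idx N. \<bar>i\<bar> < \<bar>k\<bar>}. F (-i) k (sc ((-1)^par k) (C n k i v))) = 0"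
    proof -
      have "(\<Sum>k\<in>{k\<in>idx N. \<bar>i\<bar> < \<bar>k\<bar>}. F (-i) k (sc ((-1)^par k) (C n k i v)))
         = (\<Sum>k\<in>{k\<in>idx N. p < \<bar>k\<bar>}. sc ((-1)^par k) (sc (bet N lam m p) (F (-i) i v) - sc (bet N lam m \<bar>k\<bar>) (F (-\<bar>k\<bar>) \<bar>k\<bar> v)))"
      proof (rule sum.cong)
        fix k assume k0: "k \<in> {k\<in>idx N. p < \<bar>k\<bar>}"
        hence k: "k \<in> idx N" "\<bar>i\<bar> < \<bar>k\<bar>" "-k \<in> idx N" by (auto simp: p_def idx_neg)
        have ck: "C n k (-k) v = sc (bet N lam m \<bar>k\<bar>) (F (-\<bar>k\<bar>) \<bar>k\<bar> v)"
        proof -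
          have "C n k (-k) v = sc (bet N lam m \<bar>k\<bar>) (F k (-k) v)" using O[OF k(3)] by (simp add: n_def)
          moreover have "F k (-k) = F (-\<bar>k\<bar>) \<bar>k\<bar>" using FE[OF k(1)] by (cases "k > 0") auto
          ultimately show ?thesis by simp
        qed
        show "F (-i) k (sc ((-1)^par k) (C n k i v)) = sc ((-1)^par k) (sc (bet N lam m p) (F (-i) i v) - sc (bet N lam m \<bar>k\<bar>) (F (-\<bar>k\<bar>) \<bar>k\<bar> v))"
          using k i ni bigB[of i k "2*m"] Oi ck by (simp add: Fscale n_def)
      qed (simp add: p_def)
      also have "\<dots> = 0"
        unfolding sum_gt[OF ni(3)]
      proof (rule sum.neutral, rule ballI)
        fix q assume "q \<in> {p<..int N}"
        hence "q > 0" using ni by auto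
        thus "sc ((-1)^par q) (sc (bet N lam m p) (F (-i) i v) - sc (bet N lam m \<bar>q\<bar>) (F (-\<bar>q\<bar>) \<bar>q\<bar> v)) +
            sc ((-1)^par (-q)) (sc (bet N lam m p) (F (-i) i v) - sc (bet N lam m \<bar>-q\<bar>) (F (-\<bar>-q\<bar>) \<bar>-q\<bar> v)) = 0"
          unfolding par_def by simp
      qed
      finally show ?thesis .
    qed
    also have "sc ((-1)^par i * (lam p * bet N lam m p)) (F (-i) i v) + sc (- ((-1)^par i) * bet N lam m p * lam p) (F (-i) i v) + 0 + 0
       = sc ((-1)^par i * (lam p * bet N lam m p) + (- ((-1)^par i) * bet N lam m p * lam p)) (F (-i) i v)"
      by (simp only: scale_left_distrib add_0_right)
    also have "(-1)^par i * (lam p * bet N lam m p) + (- ((-1)^par i) * bet N lam m p * lam p) = 0"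
      by (simp add: algebra_simps)
    finally show ?thesis by simp
  qed
  show ?thesis using part1 part2 by (simp add: n_def p_def)
qed


lemma ss: "(-1::complex)^par i * ((-1)^par i * x) = x"
  unfolding par_def by simp

lemma ss2: "(-1::complex)^par i * (x * (-1)^par i) = x"
  unfolding par_def by simp

lemma even_to_odd:
  assumes E: "\<And>j. j \<in> idx N \<Longrightarrow> C (Suc (Suc (2*m))) j j v = sc ((-1)^par j * bet N lam (Suc m) \<bar>j\<bar>) v \<and>
                  C (Suc (Suc (2*m))) (-j) j v = 0"
    and i: "i \<in> idx N"
  shows "C (Suc (2*Suc m)) i i v = sc (lam \<bar>i\<bar> * bet N lam (Suc m) \<bar>i\<bar>) v \<and>
         C (Suc (2*Suc m)) (-i) i v = sc (bet N lam (Suc m) \<bar>i\<bar>) (F (-i) i v)"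
proof -
  define n where "n = Suc (Suc (2*m))"
  define p where "p = \<bar>i\<bar>"
  define b where "b q = bet N lam (Suc m) q" for q
  have ni: "-i \<in> idx N" "i \<noteq> 0" "p \<ge> 0" using i by (auto simp: idx_iff p_def)
  have Ei: "C n i i v = sc ((-1)^par i * b p) v" "C n (-i) i v = 0"
    using E[OF i] by (simp_all add: n_def p_def b_def)
  have Cz: "C n k i v = 0" if "k \<in> idx N" "\<bar>k\<bar> < \<bar>i\<bar>" for k
    unfolding n_def by (rule HW) (use that i in auto)
  have small: "(\<Sum>k\<in>{k\<in>idx N. \<bar>k\<bar> < \<bar>i\<bar>}. g k (C n k i v)) = 0" if "\<And>k. k \<in> idx N \<Longrightarrow> g k 0 = 0" for g
    by (rule sum.neutral) (use i that Cz in auto)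
  have n2: "Suc (2*Suc m) = Suc n" by (simp add: n_def)
  have part1: "C (Suc n) i i v = sc (lam p * b p) v"
  proof -
    have "C (Suc n) i i v = (\<Sum>k\<in>idx N. F i k (sc ((-1)^par k) (C n k i v)))" by (simp add: n_def)
    also have "\<dots> = F i i (sc ((-1)^par i) (C n i i v)) + F i (-i) (sc ((-1)^par (-i)) (C n (-i) i v))
       + (\<Sum>k\<in>{k\<in>idx N. \<bar>k\<bar> < \<bar>i\<bar>}. F i k (sc ((-1)^par k) (C n k i v)))
       + (\<Sum>k\<in>{k\<in>idx N. \<bar>i\<bar> < \<bar>k\<bar>}. F i k (sc ((-1)^par k) (C n k i v)))"
      by (rule split_sum[OF i])
    also have "F i i (sc ((-1)^par i) (C n i i v)) = sc (lam p * b p) v"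
      using Ei Fii[OF i] i by (simp add: Fscale p_def ss2 mult.commute)
    also have "F i (-i) (sc ((-1)^par (-i)) (C n (-i) i v)) = 0"
      using Ei i ni by (simp add: F0)
    also have "(\<Sum>k\<in>{k\<in>idx N. \<bar>k\<bar> < \<bar>i\<bar>}. F i k (sc ((-1)^par k) (C n k i v))) = 0"
      by (rule small) (use i in \<open>simp add: F0\<close>)
    also have "(\<Sum>k\<in>{k\<in>idx N. \<bar>i\<bar> < \<bar>k\<bar>}. F i k (sc ((-1)^par k) (C n k i v))) = 0"
    proof -
      have "(\<Sum>k\<in>{k\<in>idx N. \<bar>i\<bar> < \<bar>k\<bar>}. F i k (sc ((-1)^par k) (C n k i v)))
         = (\<Sum>k\<in>{k\<in>idx N. p < \<bar>k\<bar>}. sc ((-1)^par k * ((-1)^par i * b p) - (-1)^par i * (-1)^par k * b \<bar>k\<bar>) v)"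
      proof (rule sum.cong)
        fix k assume k0: "k \<in> {k\<in>idx N. p < \<bar>k\<bar>}"
        hence k: "k \<in> idx N" "\<bar>i\<bar> < \<bar>k\<bar>" by (auto simp: p_def)
        have Ek: "C n k k v = sc ((-1)^par k * b \<bar>k\<bar>) v" using E[OF k(1)] by (simp add: n_def b_def)
        have "F i k (sc ((-1)^par k) (C n k i v)) = sc ((-1)^par k) (F i k (C n k i v))"
          using k i by (simp add: Fscale)
        also have "\<dots> = sc ((-1)^par k) (sc ((-1)^par i * b p) v - sc ((-1)^par i * (-1)^par k) (sc ((-1)^par k * b \<bar>k\<bar>) v))"
          using bigA[of i k "Suc (2*m)"] k i Ei Ek by (simp add: n_def)
        also have "\<dots> = sc ((-1)^par k * ((-1)^par i * b p) - (-1)^par k * (((-1)^par i * (-1)^par k) * ((-1)^par k * b \<bar>k\<bar>))) v"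
          by (simp add: scale_right_diff_distrib scale_left_diff_distrib)
        also have "(-1)^par k * (((-1)^par i * (-1)^par k) * ((-1)^par k * b \<bar>k\<bar>)) = (-1)^par i * (-1)^par k * b \<bar>k\<bar>"
          unfolding par_def by simp
        finally show "F i k (sc ((-1)^par k) (C n k i v)) = sc ((-1)^par k * ((-1)^par i * b p) - (-1)^par i * (-1)^par k * b \<bar>k\<bar>) v" .
      qed (simp add: p_def)
      also have "\<dots> = 0"
        unfolding sum_gt[OF ni(3)]
      proof (rule sum.neutral, rule ballI)
        fix q assume "q \<in> {p<..int N}"
        hence "q > 0" using ni by auto
        thus "sc ((-1)^par q * ((-1)^par i * b p) - (-1)^par i * (-1)^par q * b \<bar>q\<bar>) v +
            sc ((-1)^par (-q) * ((-1)^par i * b p) - (-1)^par i * (-1)^par (-q) * b \<bar>-q\<bar>) v = 0"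
          unfolding par_def by (simp add: scale_left_distrib[symmetric])
      qed
      finally show ?thesis .
    qed
    finally show ?thesis by simp
  qed
  have part2: "C (Suc n) (-i) i v = sc (b p) (F (-i) i v)"
  proof -
    have "C (Suc n) (-i) i v = (\<Sum>k\<in>idx N. F (-i) k (sc ((-1)^par k) (C n k i v)))" by (simp add: n_def)
    also have "\<dots> = F (-i) i (sc ((-1)^par i) (C n i i v)) + F (-i) (-i) (sc ((-1)^par (-i)) (C n (-i) i v))
       + (\<Sum>k\<in>{k\<in>idx N. \<bar>k\<bar> < \<bar>i\<bar>}. F (-i) k (sc ((-1)^par k) (C n k i v)))
       + (\<Sum>k\<in>{k\<in>idx N. \<bar>i\<bar> < \<bar>k\<bar>}. F (-i) k (sc ((-1)^par k) (C n k i v)))"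
      by (rule split_sum[OF i])
    also have "F (-i) i (sc ((-1)^par i) (C n i i v)) = sc (b p) (F (-i) i v)"
      using Ei i ni by (simp add: Fscale ss)
    also have "F (-i) (-i) (sc ((-1)^par (-i)) (C n (-i) i v)) = 0"
      using Ei i ni by (simp add: F0)
    also have "(\<Sum>k\<in>{k\<in>idx N. \<bar>k\<bar> < \<bar>i\<bar>}. F (-i) k (sc ((-1)^par k) (C n k i v))) = 0"
      by (rule small) (use ni in \<open>simp add: F0\<close>)
    also have "(\<Sum>k\<in>{k\<in>idx N. \<bar>i\<bar> < \<bar>k\<bar>}. F (-i) k (sc ((-1)^par k) (C n k i v))) = 0"
    proof (rule sum.neutral, rule ballI)
      fix k assume k0: "k \<in> {k\<in>idx N. \<bar>i\<bar> < \<bar>k\<bar>}"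
      hence k: "k \<in> idx N" "\<bar>i\<bar> < \<bar>k\<bar>" "-k \<in> idx N" by (auto simp: idx_neg)
      have "C n k (-k) v = 0" using E[OF k(3)] by (simp add: n_def)
      thus "F (-i) k (sc ((-1)^par k) (C n k i v)) = 0"
        using bigB[of i k "Suc (2*m)"] k i ni Ei by (simp add: n_def Fscale)
    qed
    finally show ?thesis by simp
  qed
  show ?thesis using part1 part2 n2 by (simp add: p_def b_def)
qed

lemma odd_all: "i \<in> idx N \<Longrightarrow> C (Suc (2*m)) i i v = sc (lam \<bar>i\<bar> * bet N lam m \<bar>i\<bar>) v \<and>
                  C (Suc (2*m)) (-i) i v = sc (bet N lam m \<bar>i\<bar>) (F (-i) i v)"
proof (induction m arbitrary: i)
  case 0 thus ?case using Fii by simp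
next
  case (Suc m)
  show ?case
    by (rule even_to_odd[OF odd_to_even[OF Suc.IH]]) (use Suc.prems in auto)
qed

end

unbundle fps_syntax

lemma G_rec:
  fixes lam :: "int \<Rightarrow> complex" and N :: nat
  defines "G \<equiv> \<lambda>q. Abs_fps (\<lambda>m. bet N lam m q)"
  shows "G q * (1 - fps_const (lam q * (lam q - 1)) * fps_X) =
         1 - fps_const 2 * fps_X * (\<Sum>r\<in>{q<..int N}. fps_const (lam r) * G r)"
proof (rule fps_ext)
  fix n
  show "(G q * (1 - fps_const (lam q * (lam q - 1)) * fps_X)) $ n =
        (1 - fps_const 2 * fps_X * (\<Sum>r\<in>{q<..int N}. fps_const (lam r) * G r)) $ n"
  proof (cases n)
    case 0 thus ?thesis by (simp add: G_def)
  next
    case (Suc k)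
    have l: "(G q * (1 - fps_const (lam q * (lam q - 1)) * fps_X)) $ n = bet N lam n q - lam q * (lam q - 1) * bet N lam k q"
      using Suc by (simp add: G_def right_diff_distrib mult.assoc[symmetric]) (simp add: algebra_simps)
    have r: "(1 - fps_const 2 * fps_X * (\<Sum>r\<in>{q<..int N}. fps_const (lam r) * G r)) $ n = - 2 * (\<Sum>r\<in>{q<..int N}. lam r * bet N lam k r)"
      using Suc by (simp add: G_def fps_sum_nth mult.assoc fps_X_mult_nth sum_distrib_left sum_negf)
    show ?thesis using l r Suc by (simp add: algebra_simps)
  qed
qed


lemma R_prod:
  fixes lam :: "int \<Rightarrow> complex" and N :: nat
  defines "G \<equiv> \<lambda>q. Abs_fps (\<lambda>m. bet N lam m q)"
  assumes "p \<le> int N"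
  shows "1 - fps_const 2 * fps_X * (\<Sum>r\<in>{p<..int N}. fps_const (lam r) * G r) =
     (\<Prod>r\<in>{p<..int N}. (1 - fps_const (lam r * (lam r + 1)) * fps_X) / (1 - fps_const (lam r * (lam r - 1)) * fps_X))"
  using assms(2)
proof (induction p rule: int_le_induct)
  case base thus ?case by simp
next
  case (step i)
  define B where "B = (1 - fps_const (lam i * (lam i - 1)) * fps_X :: complex fps)"
  define A where "A = (1 - fps_const (lam i * (lam i + 1)) * fps_X :: complex fps)"
  define T where "T = (\<Sum>r\<in>{i<..int N}. fps_const (lam r) * G r)"
  define R where "R = 1 - fps_const 2 * fps_X * T"
  have set: "{i - 1<..int N} = insert i {i<..int N}" using step by auto
  have B0: "B $ 0 \<noteq> 0" by (simp add: B_def)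
  have iB: "B * inverse B = 1" using B0 by (rule inverse_mult_eq_1')
  have rec: "G i * B = R" unfolding B_def R_def T_def G_def by (rule G_rec)
  have Gi: "G i = R * inverse B"
  proof -
    have "G i = G i * (B * inverse B)" using iB by simp
    also have "\<dots> = R * inverse B" using rec by (simp add: mult.assoc[symmetric])
    finally show ?thesis .
  qed
  have AB: "A = B - fps_const 2 * fps_X * fps_const (lam i)"
  proof -
    have e: "fps_const (lam i * (lam i + 1)) = fps_const (lam i * (lam i - 1)) + fps_const 2 * fps_const (lam i)"
      by (simp add: algebra_simps)
    show ?thesis unfolding A_def B_def e by (simp add: algebra_simps del: fps_const_add fps_const_mult)
  qed
  have "1 - fps_const 2 * fps_X * (\<Sum>r\<in>{i - 1<..int N}. fps_const (lam r) * G r)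
      = R - fps_const 2 * fps_X * fps_const (lam i) * G i"
    unfolding set R_def T_def by (simp add: algebra_simps)
  also have "\<dots> = R * (B * inverse B) - fps_const 2 * fps_X * fps_const (lam i) * (R * inverse B)"
    using Gi iB by simp
  also have "\<dots> = (R * inverse B) * A" unfolding AB by (simp add: algebra_simps)
  also have "\<dots> = A / B * R" using B0 by (simp add: fps_divide_unit mult.commute)
  also have "R = (\<Prod>r\<in>{i<..int N}. (1 - fps_const (lam r * (lam r + 1)) * fps_X) / (1 - fps_const (lam r * (lam r - 1)) * fps_X))"
    unfolding R_def T_def by (rule step.IH)
  finally show ?case unfolding set A_def B_def by simp
qed


unbundle fps_syntax

theorem mainTheorem12:
  fixes N :: nat and sc :: "complex \<Rightarrow> 'v::ab_group_add \<Rightarrow> 'v"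
    and F :: "int \<Rightarrow> int \<Rightarrow> 'v \<Rightarrow> 'v" and v :: 'v and lam :: "int \<Rightarrow> complex"
  assumes "N \<ge> 1"
    and "is_qrep N sc F"
    and "\<And>i j. i \<in> idx N \<Longrightarrow> j \<in> idx N \<Longrightarrow> \<bar>i\<bar> < \<bar>j\<bar> \<Longrightarrow> F i j v = 0"
    and "\<And>i. i \<in> {1 .. int N} \<Longrightarrow> F i i v = sc (lam i) v"
  shows "\<exists>\<gamma> :: nat \<Rightarrow> complex.
           (\<forall>m. casimir N sc F (2 * m + 1) v = sc (\<gamma> m) v) \<and>
           Abs_fps \<gamma> =
             (1 - (\<Prod>i\<in>{1 .. int N}.
                     (1 - fps_const (lam i * (lam i + 1)) * fps_X) /
                     (1 - fps_const (lam i * (lam i - 1)) * fps_X))) / fps_X"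
proof -
  have q: "vector_space sc"
    "\<And>i j. i \<in> idx N \<Longrightarrow> j \<in> idx N \<Longrightarrow> Vector_Spaces.linear sc sc (F i j)"
    "\<And>i j. i \<in> idx N \<Longrightarrow> j \<in> idx N \<Longrightarrow> F (-i) (-j) = F i j"
    "\<And>i j k l x. i \<in> idx N \<Longrightarrow> j \<in> idx N \<Longrightarrow> k \<in> idx N \<Longrightarrow> l \<in> idx N \<Longrightarrow>
      F i j (F k l x) - sc (sg i j k l) (F k l (F i j x)) =
            (if k = j then F i l x else 0)
            - sc (sg i j k l) (if i = l then F k j x else 0)
            + (if k = - j then F (- i) l x else 0)
            - sc (sg i j k l) (if - i = l then F k (- j) x else 0)"
    using assms(2) unfolding is_qrep_def Let_def sg_def by blast+
  have md: "module sc" using q(1) by (simp add: module_iff_vector_space)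
  interpret hw sc N F v lam
  proof (rule hw.intro)
    show "qr sc N F"
    proof (rule qr.intro[OF md], unfold_locales)
      fix i j x y assume "i \<in> idx N" "j \<in> idx N"
      thus "F i j (x + y) = F i j x + F i j y" using q(2) by (simp add: Vector_Spaces.linear_iff)
    next
      fix i j c x assume "i \<in> idx N" "j \<in> idx N"
      thus "F i j (sc c x) = sc c (F i j x)" using q(2) by (simp add: Vector_Spaces.linear_iff)
    next
      fix i j assume "i \<in> idx N" "j \<in> idx N"
      thus "F (-i) (-j) = F i j" by (rule q(3))
    next
      fix i j k l x assume "i \<in> idx N" "j \<in> idx N" "k \<in> idx N" "l \<in> idx N"
      thus "F i j (F k l x) - sc (sg i j k l) (F k l (F i j x)) =
            (if k = j then F i l x else 0)
            - sc (sg i j k l) (if i = l then F k j x else 0)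
            + (if k = - j then F (- i) l x else 0)
            - sc (sg i j k l) (if - i = l then F k (- j) x else 0)" by (rule q(4))
    qed
    show "hw_axioms sc N F v lam"
      by unfold_locales (use assms(3,4) in auto)
  qed
  define \<gamma> where "\<gamma> m = (\<Sum>i\<in>idx N. lam \<bar>i\<bar> * bet N lam m \<bar>i\<bar>)" for m
  define G where "G = (\<lambda>q. Abs_fps (\<lambda>m. bet N lam m q))"
  have cas: "casimir N sc F (2 * m + 1) v = sc (\<gamma> m) v" for m
  proof -
    have "casimir N sc F (2 * m + 1) v = (\<Sum>i\<in>idx N. C (Suc (2*m)) i i v)"
      by (simp add: casimir_def)
    also have "\<dots> = (\<Sum>i\<in>idx N. sc (lam \<bar>i\<bar> * bet N lam m \<bar>i\<bar>) v)"
      by (rule sum.cong) (use odd_all in auto)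
    also have "\<dots> = sc (\<gamma> m) v" by (simp add: \<gamma>_def scale_sum_left)
    finally show ?thesis .
  qed
  have set0: "{k \<in> idx N. 0 < \<bar>k\<bar>} = idx N" by (auto simp: idx_iff)
  have set1: "{0<..int N} = {1..int N}" by auto
  have gam: "Abs_fps \<gamma> = fps_const 2 * (\<Sum>r\<in>{0<..int N}. fps_const (lam r) * G r)"
  proof (rule fps_ext)
    fix n
    have "\<gamma> n = (\<Sum>q\<in>{0<..int N}. lam \<bar>q\<bar> * bet N lam n \<bar>q\<bar> + lam \<bar>-q\<bar> * bet N lam n \<bar>-q\<bar>)"
      unfolding \<gamma>_def using sum_gt[where p=0 and N=N and f="\<lambda>i. lam \<bar>i\<bar> * bet N lam n \<bar>i\<bar>"] set0 by simp
    also have "\<dots> = 2 * (\<Sum>q\<in>{0<..int N}. lam q * bet N lam n q)"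
      by (simp add: sum_distrib_left)
    finally show "Abs_fps \<gamma> $ n = (fps_const 2 * (\<Sum>r\<in>{0<..int N}. fps_const (lam r) * G r)) $ n"
      by (simp add: G_def fps_sum_nth)
  qed
  have X: "fps_X * Abs_fps \<gamma> = 1 - (\<Prod>i\<in>{1 .. int N}.
                     (1 - fps_const (lam i * (lam i + 1)) * fps_X) /
                     (1 - fps_const (lam i * (lam i - 1)) * fps_X))"
  proof -
    have R: "1 - fps_const 2 * fps_X * (\<Sum>r\<in>{0<..int N}. fps_const (lam r) * G r) = (\<Prod>i\<in>{1 .. int N}.
                     (1 - fps_const (lam i * (lam i + 1)) * fps_X) /
                     (1 - fps_const (lam i * (lam i - 1)) * fps_X))"
      unfolding G_def set1[symmetric] by (rule R_prod) simp
    show ?thesis unfolding gam by (simp only: R[symmetric]) (simp add: algebra_simps)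
  qed
  have "Abs_fps \<gamma> = (fps_X * Abs_fps \<gamma>) / fps_X"
    by (rule sym, rule nonzero_mult_div_cancel_left) simp
  hence "Abs_fps \<gamma> = (1 - (\<Prod>i\<in>{1 .. int N}.
                     (1 - fps_const (lam i * (lam i + 1)) * fps_X) /
                     (1 - fps_const (lam i * (lam i - 1)) * fps_X))) / fps_X"
    using X by simp
  thus ?thesis using cas by blast
qed


end
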